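(* Let $\sigma\in(0,1]$, let $V$ satisfy Assumption (A), and let $\gamma_\sigma,\xi_\sigma>0$ be constants such that $\hat f_\sigma$ is $\gamma_\sigma$-Lipschitz on $\mathbb R^d$ and $\hat f_\sigma\ge\xi_\sigma$ on $\mathbb R^d$. Let $K,m\ge1$ and let $\widetilde Y_{t_0},\dots,\widetilde Y_{t_K}$ be generated by the algorithm below. Then for every $k=0,1,\dots,K$, $$\mathbb E\big[\|\widetilde Y_{t_k}\|_2^2\big]\le\frac{6\gamma_\sigma^2}{\xi_\sigma^2}+3d .$$
   Context: Assumption (A): $V$ is twice continuously differentiable on $\mathbb R^d$ and there is $R>0$ with $V(x)=\|x\|_2^2/2$ for $\|x\|_2>R$. $\hat f_\sigma(x)=\exp(-V(x)/\sigma+\|x\|_2^2/(2\sigma))$. Algorithm: $s=1/K$, $t_k=ks$, $\widetilde Y_{t_0}=0$ and for $k=0,\dots,K-1$, $\widetilde Y_{t_{k+1}}=\widetilde Y_{t_k}+\sigma s\,\tilde b_m(\widetilde Y_{t_k},t_k)+\sqrt{\sigma s}\,\epsilon_{k+1}$, where $\tilde b_m(y,t_k)=\frac{\frac1m\sum_{j=1}^m\nabla\hat f_\sigma(y+\sqrt{(1-t_k)\sigma}Z_{k,j})}{\frac1m\sum_{j=1}^m\hat f_\sigma(y+\sqrt{(1-t_k)\sigma}Z_{k,j})}$, with all $\epsilon_k$ and $Z_{k,j}$ i.i.d. $N(0,\mathbf I_d)$ and mutually independent. *)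

theory Defs
  imports "HOL-Analysis.Analysis" "HOL-Probability.Probability"
begin

definition C2_UNIV :: "('d::euclidean_space \<Rightarrow> real) \<Rightarrow> bool" where
  "C2_UNIV V \<longleftrightarrow> (\<exists>V' :: 'd \<Rightarrow> ('d \<Rightarrow>\<^sub>L real). \<exists>V'' :: 'd \<Rightarrow> ('d \<Rightarrow>\<^sub>L ('d \<Rightarrow>\<^sub>L real)).
      (\<forall>x. (V has_derivative blinfun_apply (V' x)) (at x)) \<and>
      (\<forall>x. (V' has_derivative blinfun_apply (V'' x)) (at x)) \<and>
      continuous_on UNIV V'')"

definition assumption_A :: "('d::euclidean_space \<Rightarrow> real) \<Rightarrow> bool" where
  "assumption_A V \<longleftrightarrow> C2_UNIV V \<and>
     (\<exists>R>0. \<forall>x. norm x > R \<longrightarrow> V x = (norm x)^2 / 2)"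

definition fhat :: "('d::euclidean_space \<Rightarrow> real) \<Rightarrow> real \<Rightarrow> 'd \<Rightarrow> real" where
  "fhat V \<sigma> x = exp (- V x / \<sigma> + (norm x)^2 / (2 * \<sigma>))"

definition grad :: "('d::euclidean_space \<Rightarrow> real) \<Rightarrow> 'd \<Rightarrow> 'd" where
  "grad f x = (SOME D. GDERIV f x :> D)"

definition std_gauss_density :: "'d::euclidean_space \<Rightarrow> ennreal" where
  "std_gauss_density x = ennreal ((2 * pi) powr (- (real DIM('d) / 2)) * exp (- ((norm x)\<^sup>2 / 2)))"

definition btilde :: "('d::euclidean_space \<Rightarrow> real) \<Rightarrow> real \<Rightarrow> nat \<Rightarrow> nat \<Rightarrow>
    (nat \<Rightarrow> nat \<Rightarrow> 'd) \<Rightarrow> 'd \<Rightarrow> nat \<Rightarrow> 'd" where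
  "btilde V \<sigma> K m Z y k =
     (let t = real k / real K;
          pts = (\<lambda>j. y + sqrt ((1 - t) * \<sigma>) *\<^sub>R Z k j)
      in (1 / ((1 / real m) * (\<Sum>j=1..m. fhat V \<sigma> (pts j)))) *\<^sub>R
         ((1 / real m) *\<^sub>R (\<Sum>j=1..m. grad (fhat V \<sigma>) (pts j))))"

text \<open>The algorithm: Y 0 = 0, Y (k+1) = Y k + \<sigma> s btilde(Y k, t_k) + sqrt(\<sigma> s) eps (k+1), s = 1/K.
  eps and Z are given pathwise (for a fixed sample point).\<close>
primrec Yalg :: "('d::euclidean_space \<Rightarrow> real) \<Rightarrow> real \<Rightarrow> nat \<Rightarrow> nat \<Rightarrow>
    (nat \<Rightarrow> 'd) \<Rightarrow> (nat \<Rightarrow> nat \<Rightarrow> 'd) \<Rightarrow> nat \<Rightarrow> 'd" where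
  "Yalg V \<sigma> K m eps Z 0 = 0"
| "Yalg V \<sigma> K m eps Z (Suc k) =
     Yalg V \<sigma> K m eps Z k
     + (\<sigma> * (1 / real K)) *\<^sub>R btilde V \<sigma> K m Z (Yalg V \<sigma> K m eps Z k) k
     + sqrt (\<sigma> * (1 / real K)) *\<^sub>R eps (Suc k)"


end

theory Submission
  imports Defs
begin


lemma deriv_gradient_exists:
  fixes f :: "'d::euclidean_space \<Rightarrow> real"
  assumes "(f has_derivative f') F"
  shows "\<exists>D. f' = (\<lambda>h. h \<bullet> D)"
proof -
  have lin: "linear f'" using assms has_derivative_linear by blast
  define D where "D = (\<Sum>b\<in>Basis. f' b *\<^sub>R b)"
  have "f' h = h \<bullet> D" for h
  proof -
    have "f' h = f' (\<Sum>b\<in>Basis. (h \<bullet> b) *\<^sub>R b)" by (simp add: euclidean_representation)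
    also have "\<dots> = (\<Sum>b\<in>Basis. (h \<bullet> b) * f' b)"
      using lin by (simp add: linear_sum linear_scale)
    also have "\<dots> = h \<bullet> D" unfolding D_def by (simp add: inner_sum_right mult.commute)
    finally show ?thesis .
  qed
  thus ?thesis by blast
qed

lemma deriv_bound_lipschitz:
  fixes f :: "'d::euclidean_space \<Rightarrow> real"
  assumes d: "GDERIV f x :> D" and L: "\<gamma>-lipschitz_on UNIV f"
  shows "norm D \<le> \<gamma>"
proof -
  define \<phi> where "\<phi> t = f (x + t *\<^sub>R D)" for t :: real
  have h1: "((\<lambda>t. x + t *\<^sub>R D) has_derivative (\<lambda>t. t *\<^sub>R D)) (at 0)"
    by (auto intro!: derivative_eq_intros)
  have h2: "(f has_derivative (\<lambda>h. h \<bullet> D)) (at ((\<lambda>t. x + t *\<^sub>R D) 0))"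
    using d by (simp add: gderiv_def)
  have "(\<phi> has_derivative (\<lambda>t. (t *\<^sub>R D) \<bullet> D)) (at 0)"
  proof -
    have "((\<lambda>t. f (x + t *\<^sub>R D)) has_derivative (\<lambda>t. (t *\<^sub>R D) \<bullet> D)) (at 0)"
      using has_derivative_compose[OF h1 h2] by simp
    thus ?thesis unfolding \<phi>_def .
  qed
  hence "(\<phi> has_real_derivative (D \<bullet> D)) (at 0)"
    unfolding has_field_derivative_def by (simp add: mult.commute[of _ "D \<bullet> D"])
  hence lim: "((\<lambda>t. (\<phi> t - \<phi> 0) / (t - 0)) \<longlongrightarrow> D \<bullet> D) (at 0)"
    using DERIV_def by (metis (no_types) has_field_derivative_iff)
  have gnn: "0 \<le> \<gamma>" using L lipschitz_on_nonneg by blast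
  have ev: "\<forall>\<^sub>F t in at 0. (\<phi> t - \<phi> 0) / (t - 0) \<le> \<gamma> * norm D"
  proof (rule always_eventually, rule allI)
    fix t :: real
    have "\<bar>\<phi> t - \<phi> 0\<bar> \<le> \<gamma> * dist (x + t *\<^sub>R D) x"
      unfolding \<phi>_def using lipschitz_onD[OF L, of "x + t *\<^sub>R D" x] by (simp add: dist_real_def)
    also have "\<dots> = \<gamma> * (\<bar>t\<bar> * norm D)" by (simp add: dist_norm)
    finally have h: "\<bar>\<phi> t - \<phi> 0\<bar> \<le> \<gamma> * (\<bar>t\<bar> * norm D)" .
    show "(\<phi> t - \<phi> 0) / (t - 0) \<le> \<gamma> * norm D"
    proof (cases "t = 0")
      case True thus ?thesis using gnn by simp
    next
      case False
      have "(\<phi> t - \<phi> 0) / t \<le> \<bar>\<phi> t - \<phi> 0\<bar> / \<bar>t\<bar>"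
        by (metis abs_divide abs_ge_self)
      also have "\<dots> \<le> \<gamma> * norm D" using h False by (simp add: divide_le_eq mult.commute mult.left_commute)
      finally show ?thesis by simp
    qed
  qed
  have "D \<bullet> D \<le> \<gamma> * norm D"
    using tendsto_upperbound[OF lim ev] by simp
  hence "norm D * norm D \<le> \<gamma> * norm D" by (simp add: dot_square_norm power2_eq_square)
  thus ?thesis
    by (metis gnn mult_right_le_imp_le norm_ge_zero order.order_iff_strict)
qed



lemma fhat_differentiable:
  assumes "assumption_A V"
  shows "\<exists>f'. (fhat V \<sigma> has_derivative f') (at x)"
proof -
  have "C2_UNIV V" using assms by (simp add: assumption_A_def)
  then obtain V' :: "'a \<Rightarrow> ('a \<Rightarrow>\<^sub>L real)" where hV0: "\<forall>x. (V has_derivative blinfun_apply (V' x)) (at x)"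
    unfolding C2_UNIV_def by (elim exE conjE) (rule that)
  have hV: "(V has_derivative blinfun_apply (V' x)) (at x)" using hV0 by blast
  have eq: "fhat V \<sigma> = (\<lambda>y. exp ((- V y) * inverse \<sigma> + (norm y)^2 * inverse (2 * \<sigma>)))"
    by (rule ext) (simp only: fhat_def divide_inverse)
  have "((\<lambda>y. exp ((- V y) * inverse \<sigma> + (norm y)^2 * inverse (2 * \<sigma>))) has_derivative
      (\<lambda>h. exp ((- V x) * inverse \<sigma> + (norm x)^2 * inverse (2 * \<sigma>)) * ((- blinfun_apply (V' x) h) * inverse \<sigma> + (2 *\<^sub>R (x \<bullet> h)) * inverse (2 * \<sigma>)))) (at x)"
  proof -
    have h1: "((\<lambda>y. (- V y) * inverse \<sigma>) has_derivative (\<lambda>h. (- blinfun_apply (V' x) h) * inverse \<sigma>)) (at x)"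
      by (intro has_derivative_mult_left has_derivative_minus hV)
    have h2: "((\<lambda>y. (norm y)^2 * inverse (2 * \<sigma>)) has_derivative (\<lambda>h. (2 *\<^sub>R (x \<bullet> h)) * inverse (2 * \<sigma>))) (at x)"
      by (intro has_derivative_mult_left has_derivative_sqnorm_at)
    note h3 = has_derivative_add[OF h1 h2]
    show ?thesis using has_derivative_exp[OF h3] by (simp add: ac_simps)
  qed
  thus ?thesis unfolding eq by blast
qed

lemma grad_bound:
  assumes "assumption_A V" "\<gamma>-lipschitz_on UNIV (fhat V \<sigma>)"
  shows "norm (grad (fhat V \<sigma>) x) \<le> \<gamma>"
proof -
  obtain f' where "(fhat V \<sigma> has_derivative f') (at x)" using fhat_differentiable[OF assms(1)] by blast
  then obtain D where "f' = (\<lambda>h. h \<bullet> D)" using deriv_gradient_exists by blast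
  hence "GDERIV (fhat V \<sigma>) x :> D" unfolding gderiv_def using \<open>(fhat V \<sigma> has_derivative f') (at x)\<close> by simp
  hence "GDERIV (fhat V \<sigma>) x :> grad (fhat V \<sigma>) x" unfolding grad_def by (rule someI)
  thus ?thesis using deriv_bound_lipschitz assms(2) by blast
qed



lemma btilde_bound:
  assumes gb: "\<And>x. norm (grad (fhat V \<sigma>) x) \<le> \<gamma>"
    and fb: "\<forall>x. fhat V \<sigma> x \<ge> \<xi>" and xi: "0 < \<xi>" and m: "m \<ge> 1"
  shows "norm (btilde V \<sigma> K m Z y k) \<le> \<gamma> / \<xi>"
proof -
  define pts where "pts = (\<lambda>j. y + sqrt ((1 - real k / real K) * \<sigma>) *\<^sub>R Z k j)"
  define Sf where "Sf = (\<Sum>j=1..m. fhat V \<sigma> (pts j))"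
  define Sg where "Sg = (\<Sum>j=1..m. grad (fhat V \<sigma>) (pts j))"
  have mpos: "0 < real m" using m by simp
  have gnn: "0 \<le> \<gamma>" using gb[of y] norm_ge_zero order_trans by blast
  have Sf: "real m * \<xi> \<le> Sf"
  proof -
    have "(\<Sum>j=1..m. \<xi>) \<le> Sf" unfolding Sf_def by (rule sum_mono) (use fb in auto)
    thus ?thesis by simp
  qed
  have Sfpos: "0 < Sf" using Sf mpos xi by (smt (verit) mult_pos_pos)
  have Sg: "norm Sg \<le> real m * \<gamma>"
  proof -
    have "norm Sg \<le> (\<Sum>j=1..m. norm (grad (fhat V \<sigma>) (pts j)))" unfolding Sg_def by (rule norm_sum)
    also have "\<dots> \<le> (\<Sum>j=1..m. \<gamma>)" by (rule sum_mono) (use gb in auto)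
    finally show ?thesis by simp
  qed
  have b: "btilde V \<sigma> K m Z y k = (1 / ((1 / real m) * Sf)) *\<^sub>R ((1 / real m) *\<^sub>R Sg)"
    unfolding btilde_def Let_def pts_def Sf_def Sg_def by simp
  have "norm (btilde V \<sigma> K m Z y k) = norm Sg / Sf"
    unfolding b using mpos Sfpos by (simp add: field_simps)
  also have "\<dots> \<le> (real m * \<gamma>) / (real m * \<xi>)"
    by (rule frac_le) (use Sg Sf mpos xi gnn in auto)
  also have "\<dots> = \<gamma> / \<xi>" using mpos by simp
  finally show ?thesis .
qed

lemma Yalg_decomp:
  assumes gb: "\<And>y k. norm (btilde V \<sigma> K m Z y k) \<le> B" and s: "0 < \<sigma>"
  shows "\<exists>A. norm A \<le> real k * (\<sigma> * (1 / real K)) * B \<and>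
     Yalg V \<sigma> K m eps Z k = A + sqrt (\<sigma> * (1 / real K)) *\<^sub>R (\<Sum>i\<in>{1..k}. eps i)"
proof (induction k)
  case 0
  then show ?case by simp
next
  case (Suc k)
  then obtain A where A: "norm A \<le> real k * (\<sigma> * (1 / real K)) * B"
     "Yalg V \<sigma> K m eps Z k = A + sqrt (\<sigma> * (1 / real K)) *\<^sub>R (\<Sum>i\<in>{1..k}. eps i)" by blast
  define A' where "A' = A + (\<sigma> * (1 / real K)) *\<^sub>R btilde V \<sigma> K m Z (Yalg V \<sigma> K m eps Z k) k"
  have c: "0 \<le> \<sigma> * (1 / real K)" using s by simp
  have "norm A' \<le> norm A + (\<sigma> * (1 / real K)) * B"
    unfolding A'_def using norm_triangle_ineq[of A] gb c
    by (smt (verit) mult_left_mono norm_scaleR abs_of_nonneg)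
  also have "\<dots> \<le> real (Suc k) * (\<sigma> * (1 / real K)) * B"
  proof -
    define c where "c = \<sigma> * (1 / real K)"
    have "real (Suc k) * c * B = real k * c * B + c * B" by (simp add: ring_distribs)
    thus ?thesis using A(1) unfolding c_def[symmetric] by linarith
  qed
  finally have n: "norm A' \<le> real (Suc k) * (\<sigma> * (1 / real K)) * B" .
  have "Yalg V \<sigma> K m eps Z (Suc k) = A' + sqrt (\<sigma> * (1 / real K)) *\<^sub>R (\<Sum>i\<in>{1..Suc k}. eps i)"
    by (simp add: A(2) A'_def algebra_simps scaleR_add_right)
  with n show ?case by blast
qed

lemma sq_split:
  fixes a b :: "'d::real_inner"
  shows "(norm (a + b))^2 \<le> 6 * (norm a)^2 + 6/5 * (norm b)^2"
proof -
  have "(norm (a + b))^2 = (norm a)^2 + 2 * (a \<bullet> b) + (norm b)^2"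
    by (simp add: power2_norm_eq_inner inner_add_left inner_add_right inner_commute)
  also have "a \<bullet> b \<le> norm a * norm b" by (rule Cauchy_Schwarz_ineq2[THEN order_trans[OF abs_ge_self]])
  hence "2 * (a \<bullet> b) \<le> 5 * (norm a)^2 + 1/5 * (norm b)^2"
  proof -
    have "0 \<le> (5 * norm a - norm b)^2" by simp
    also have "(5 * norm a - norm b)^2 = 25 * (norm a)^2 - 10 * (norm a * norm b) + (norm b)^2"
      by (simp add: power2_eq_square algebra_simps)
    finally show ?thesis using \<open>a \<bullet> b \<le> norm a * norm b\<close> by linarith
  qed
  finally show ?thesis by simp
qed



lemma real_ineq1:
  fixes d y :: real
  assumes d: "d \<ge> 1" and y: "y \<ge> 0"
  shows "y * exp (- (y / 2)) \<le> (2 * (d + 1) / exp 1) * exp (- (y / (2 * (1 + 1 / d))))"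
proof -
  define a where "a = 1 / (d + 1)"
  define z where "z = a * y / 2"
  have apos: "0 < a" unfolding a_def using d by simp
  have inv: "1 / (1 + 1 / d) = 1 - a" unfolding a_def using d by (simp add: field_simps)
  have e: "- (y / 2) = - (y / (2 * (1 + 1 / d))) + - z"
  proof -
    have "y / (2 * (1 + 1 / d)) = y * (1 / (1 + 1/d)) / 2" by simp
    also have "\<dots> = y * (1 - a) / 2" by (simp only: inv)
    finally show ?thesis unfolding z_def by (simp add: algebra_simps)
  qed
  have E: "exp (- (y / 2)) = exp (- (y / (2 * (1 + 1 / d)))) * exp (- z)"
    unfolding e exp_add ..
  have "z \<le> exp (z - 1)" using exp_ge_add_one_self[of "z - 1"] by simp
  also have "exp (z - 1) = exp z / exp 1" by (simp add: exp_diff)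
  finally have zz: "z * exp (- z) \<le> 1 / exp 1"
    by (simp add: exp_minus field_simps)
  have yz: "y = 2 * (d + 1) * z" unfolding z_def a_def using d by (simp add: field_simps)
  have "y * exp (- (y / 2)) = exp (- (y / (2 * (1 + 1 / d)))) * (2 * (d + 1)) * (z * exp (- z))"
    unfolding E by (subst yz) (simp add: algebra_simps)
  also have "\<dots> \<le> exp (- (y / (2 * (1 + 1 / d)))) * (2 * (d + 1)) * (1 / exp 1)"
    by (rule mult_left_mono[OF zz]) (use d in simp)
  finally show ?thesis by (simp add: divide_simps mult.commute mult.left_commute)
qed

lemma real_ineq2:
  fixes n :: nat
  assumes "n \<ge> 1"
  shows "(2 * (real n + 1) / exp 1) * sqrt (1 + 1 / real n) ^ n \<le> 5/2 * real n"
proof -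
  have n: "real n \<ge> 1" using assms by simp
  have "1 + 1 / real n \<le> exp (1 / real n)" by (rule exp_ge_add_one_self)
  also have "exp (1 / real n) = (exp (1 / (2 * real n)))^2"
    by (simp add: power2_eq_square exp_add[symmetric])
  finally have "sqrt (1 + 1 / real n) \<le> exp (1 / (2 * real n))"
    by (simp add: real_le_lsqrt real_sqrt_le_iff) 
  hence "sqrt (1 + 1 / real n) ^ n \<le> exp (1 / (2 * real n)) ^ n"
    by (rule power_mono) simp
  also have "\<dots> = exp (real n * (1 / (2 * real n)))" by (rule exp_of_nat_mult[symmetric])
  also have "\<dots> = exp (1/2)" using n by simp
  finally have s: "sqrt (1 + 1 / real n) ^ n \<le> exp (1/2)" .
  have e1: "exp (1::real) = exp (1/2) * exp (1/2)" by (simp add: exp_add[symmetric])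
  have e2: "13/8 \<le> exp (1/2::real)" using exp_lower_Taylor_quadratic[of "1/2::real"] by (simp add: power2_eq_square)
  have "(2 * (real n + 1) / exp 1) * sqrt (1 + 1 / real n) ^ n \<le> (2 * (real n + 1) / exp 1) * exp (1/2)"
    by (rule mult_left_mono[OF s]) simp
  also have "\<dots> = 2 * (real n + 1) / exp (1/2)" unfolding e1 by simp
  also have "\<dots> \<le> 2 * (real n + 1) / (13/8)"
    by (rule divide_left_mono[OF e2]) auto
  also have "\<dots> \<le> 5/2 * real n" using n by simp
  finally show ?thesis .
qed



definition gq :: "'d::euclidean_space \<Rightarrow> real" where
  "gq x = (2 * pi) powr (- (real DIM('d) / 2)) * exp (- ((norm x)\<^sup>2 / 2))"

lemma std_gauss_density_eq: "std_gauss_density = (\<lambda>x. ennreal (gq x))"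
  by (simp add: fun_eq_iff std_gauss_density_def gq_def)

lemma gq_nonneg: "0 \<le> gq x"
  by (simp add: gq_def)

lemma gq_measurable[measurable]: "gq \<in> borel_measurable borel"
  unfolding gq_def by measurable

lemma gq_uminus: "gq (- x) = gq x"
  by (simp add: gq_def)

lemma lborel_scale:
  fixes g :: "'d::euclidean_space \<Rightarrow> ennreal"
  assumes g[measurable]: "g \<in> borel_measurable borel" and s: "0 < s"
  shows "(\<integral>\<^sup>+x. g x \<partial>lborel) = ennreal (s ^ DIM('d)) * (\<integral>\<^sup>+x. g (s *\<^sub>R x) \<partial>lborel)"
proof -
  have e: "lborel = density (distr lborel borel (\<lambda>x::'d. s *\<^sub>R x)) (\<lambda>_. ennreal (s ^ DIM('d)))"
    using lborel_affine[of s "0::'d"] s by simp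
  have "(\<integral>\<^sup>+x. g x \<partial>lborel) = integral\<^sup>N (density (distr lborel borel (\<lambda>x::'d. s *\<^sub>R x)) (\<lambda>_. ennreal (s ^ DIM('d)))) g"
    using arg_cong[where f="\<lambda>N. integral\<^sup>N N g", OF e] .
  also have "\<dots> = (\<integral>\<^sup>+x. ennreal (s ^ DIM('d)) * g x \<partial>(distr lborel borel (\<lambda>x::'d. s *\<^sub>R x)))"
    by (rule nn_integral_density) auto
  also have "\<dots> = (\<integral>\<^sup>+x. ennreal (s ^ DIM('d)) * g (s *\<^sub>R x) \<partial>lborel)"
    by (rule nn_integral_distr) auto
  also have "\<dots> = ennreal (s ^ DIM('d)) * (\<integral>\<^sup>+x. g (s *\<^sub>R x) \<partial>lborel)"
    by (rule nn_integral_cmult) auto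
  finally show ?thesis .
qed

lemma gauss_total:
  fixes X :: "'a \<Rightarrow> 'd::euclidean_space"
  assumes P: "prob_space M" and X: "distributed M lborel X std_gauss_density"
  shows "(\<integral>\<^sup>+x. ennreal (gq (x::'d)) \<partial>lborel) = 1"
proof -
  have "emeasure M (X -` UNIV \<inter> space M) = (\<integral>\<^sup>+x. std_gauss_density (x::'d) * indicator UNIV x \<partial>lborel)"
    using distributed_emeasure[OF X, of UNIV] by simp
  moreover have "emeasure M (X -` UNIV \<inter> space M) = 1"
    using prob_space.emeasure_space_1[OF P] by simp
  ultimately show ?thesis by (simp add: std_gauss_density_eq)
qed

lemma gauss_second:
  fixes X :: "'a \<Rightarrow> 'd::euclidean_space"
  assumes P: "prob_space M" and X: "distributed M lborel X std_gauss_density"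
  shows "(\<integral>\<^sup>+\<omega>. ennreal ((norm (X \<omega>))\<^sup>2) \<partial>M) \<le> ennreal (5/2 * real DIM('d))"
proof -
  define n where "n = DIM('d)"
  define d where "d = real n"
  have d1: "d \<ge> 1" unfolding d_def n_def using DIM_positive[where 'a='d] by linarith
  define s where "s = sqrt (1 + 1 / d)"
  have dpos: "0 < 1 / d" using d1 by simp
  have dpos': "0 < 1 + 1 / d" using dpos by linarith
  have spos: "0 < s" unfolding s_def using dpos' by simp
  have s2: "s^2 = 1 + 1 / d" unfolding s_def using dpos' by simp
  define B where "B = 2 * (d + 1) / exp 1"
  define c0 where "c0 = (2 * pi) powr (- (d / 2))"
  have c0: "0 \<le> c0" unfolding c0_def by simp
  define h where "h x = c0 * exp (- ((norm x)\<^sup>2 / (2 * (1 + 1 / d))))" for x :: 'd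
  have h_meas[measurable]: "h \<in> borel_measurable borel" unfolding h_def by measurable
  have "(\<integral>\<^sup>+\<omega>. ennreal ((norm (X \<omega>))\<^sup>2) \<partial>M) = (\<integral>\<^sup>+x. std_gauss_density (x::'d) * ennreal ((norm x)\<^sup>2) \<partial>lborel)"
    by (rule distributed_nn_integral[OF X, symmetric]) measurable
  also have "\<dots> \<le> (\<integral>\<^sup>+x. ennreal (B * h x) \<partial>lborel)"
  proof (rule nn_integral_mono)
    fix x :: 'd
    have "gq x * (norm x)\<^sup>2 = c0 * ((norm x)\<^sup>2 * exp (- ((norm x)\<^sup>2 / 2)))"
      unfolding gq_def c0_def d_def n_def by simp
    also have "\<dots> \<le> c0 * (B * exp (- ((norm x)\<^sup>2 / (2 * (1 + 1 / d)))))"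
      unfolding B_def by (rule mult_left_mono[OF real_ineq1[OF d1] c0]) simp
    also have "\<dots> = B * h x" unfolding h_def by simp
    finally have "gq x * (norm x)\<^sup>2 \<le> B * h x" .
    thus "std_gauss_density x * ennreal ((norm x)\<^sup>2) \<le> ennreal (B * h x)"
      by (simp add: std_gauss_density_eq ennreal_mult''[symmetric] gq_nonneg ennreal_leI)
  qed
  also have "\<dots> = ennreal B * (\<integral>\<^sup>+x. ennreal (h x) \<partial>lborel)"
  proof -
    have Bnn: "0 \<le> B" unfolding B_def using d1 by simp
    have hnn: "0 \<le> h x" for x unfolding h_def using c0 by simp
    have "(\<lambda>x. ennreal (B * h x)) = (\<lambda>x. ennreal B * ennreal (h x))"
      by (simp add: ennreal_mult Bnn hnn)
    thus ?thesis by (simp add: nn_integral_cmult)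
  qed
  also have "(\<integral>\<^sup>+x. ennreal (h x) \<partial>lborel) = ennreal (s ^ n) * (\<integral>\<^sup>+x. ennreal (h (s *\<^sub>R x)) \<partial>lborel)"
    unfolding n_def by (rule lborel_scale[OF _ spos]) measurable
  also have "(\<lambda>x. ennreal (h (s *\<^sub>R x))) = (\<lambda>x. ennreal (gq x))"
  proof
    fix x :: 'd
    have "(norm (s *\<^sub>R x))\<^sup>2 / (2 * (1 + 1 / d)) = (norm x)\<^sup>2 / 2"
    proof -
      have "(norm (s *\<^sub>R x))\<^sup>2 = (1 + 1 / d) * (norm x)\<^sup>2"
        using s2 spos by (simp add: power_mult_distrib)
      moreover have "(1 + 1 / d) * (norm x)\<^sup>2 / (2 * (1 + 1 / d)) = (norm x)\<^sup>2 / 2"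
        using dpos' by (simp add: field_simps)
      ultimately show ?thesis by simp
    qed
    thus "ennreal (h (s *\<^sub>R x)) = ennreal (gq x)"
      unfolding h_def gq_def c0_def d_def n_def by simp
  qed
  also have "(\<integral>\<^sup>+x. ennreal (gq (x::'d)) \<partial>lborel) = 1" by (rule gauss_total[OF P X])
  also have "ennreal B * (ennreal (s ^ n) * 1) = ennreal (B * s ^ n)"
  proof -
    have "0 \<le> B" unfolding B_def using d1 by simp
    thus ?thesis using spos by (simp add: ennreal_mult)
  qed
  also have "\<dots> \<le> ennreal (5/2 * real DIM('d))"
    using real_ineq2[of n] d1 unfolding B_def s_def d_def n_def by (auto intro: ennreal_leI)
  finally show ?thesis .
qed

lemma gauss_mean:
  fixes X :: "'a \<Rightarrow> 'd::euclidean_space"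
  assumes X: "distributed M lborel X std_gauss_density"
  shows "(\<integral>\<omega>. X \<omega> \<bullet> b \<partial>M) = 0"
proof -
  have X': "distributed M lborel X (\<lambda>x. ennreal (gq x))" using X by (simp add: std_gauss_density_eq)
  define I where "I = (\<integral>x. gq x * (x \<bullet> b) \<partial>lborel)"
  have I: "(\<integral>\<omega>. X \<omega> \<bullet> b \<partial>M) = I"
    unfolding I_def by (rule distributed_integral[OF X', symmetric]) (auto simp: gq_nonneg)
  have e: "lborel = distr lborel borel (\<lambda>x::'d. - x)"
    using lborel_affine[of "-1" "0::'d"] by (simp add: density_1)
  have "I = (\<integral>x. gq x * (x \<bullet> b) \<partial>(distr lborel borel (\<lambda>x::'d. - x)))"
    unfolding I_def using arg_cong[where f="\<lambda>N. integral\<^sup>L N (\<lambda>x. gq x * (x \<bullet> b))", OF e] .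
  also have "\<dots> = (\<integral>x. gq (- x) * ((- x) \<bullet> b) \<partial>lborel)"
    by (rule integral_distr) auto
  also have "\<dots> = - I" unfolding I_def by (simp add: gq_uminus)
  finally have "I = 0" by simp
  thus ?thesis using I by simp
qed



context prob_space begin

lemma gauss_int2:
  fixes X :: "'a \<Rightarrow> 'd::euclidean_space"
  assumes X: "distributed M lborel X std_gauss_density"
  shows "integrable M (\<lambda>\<omega>. (norm (X \<omega>))\<^sup>2)"
    and "(\<integral>\<omega>. (norm (X \<omega>))\<^sup>2 \<partial>M) \<le> 5/2 * real DIM('d)"
proof -
  have Xm[measurable]: "X \<in> borel_measurable M"
    using distributed_measurable[OF X] by (simp add: measurable_lborel2)
  have b: "(\<integral>\<^sup>+\<omega>. ennreal ((norm (X \<omega>))\<^sup>2) \<partial>M) \<le> ennreal (5/2 * real DIM('d))"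
    by (rule gauss_second[OF prob_space_axioms X])
  show i: "integrable M (\<lambda>\<omega>. (norm (X \<omega>))\<^sup>2)"
    by (rule integrableI_nonneg) (use b in \<open>auto simp: top_unique intro: le_less_trans\<close>)
  have "ennreal (\<integral>\<omega>. (norm (X \<omega>))\<^sup>2 \<partial>M) \<le> ennreal (5/2 * real DIM('d))"
    using b nn_integral_eq_integral[OF i] by simp
  thus "(\<integral>\<omega>. (norm (X \<omega>))\<^sup>2 \<partial>M) \<le> 5/2 * real DIM('d)"
    by (simp add: ennreal_le_iff)
qed

lemma gauss_int1:
  fixes X :: "'a \<Rightarrow> 'd::euclidean_space"
  assumes X: "distributed M lborel X std_gauss_density"
  shows "integrable M (\<lambda>\<omega>. X \<omega> \<bullet> b)"
proof -
  have Xm[measurable]: "X \<in> borel_measurable M"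
    using distributed_measurable[OF X] by (simp add: measurable_lborel2)
  have int1: "integrable M (\<lambda>\<omega>. norm b * (1 + (norm (X \<omega>))\<^sup>2))"
    using gauss_int2(1)[OF X] by auto
  have bnd: "norm (X \<omega> \<bullet> b) \<le> norm (norm b * (1 + (norm (X \<omega>))\<^sup>2))" for \<omega>
  proof -
    have a: "norm (X \<omega> \<bullet> b) \<le> norm (X \<omega>) * norm b" by (simp add: Cauchy_Schwarz_ineq2)
    have c: "norm (X \<omega>) \<le> 1 + (norm (X \<omega>))\<^sup>2"
    proof -
      have "0 \<le> (norm (X \<omega>) - 1)\<^sup>2" by simp
      also have "(norm (X \<omega>) - 1)\<^sup>2 = (norm (X \<omega>))\<^sup>2 - 2 * norm (X \<omega>) + 1"
        by (simp add: power2_diff)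
      finally show ?thesis using norm_ge_zero[of "X \<omega>"] by linarith
    qed
    have d: "norm (X \<omega>) * norm b \<le> (1 + (norm (X \<omega>))\<^sup>2) * norm b"
      by (rule mult_right_mono[OF c]) simp
    have e: "norm (norm b * (1 + (norm (X \<omega>))\<^sup>2)) = (1 + (norm (X \<omega>))\<^sup>2) * norm b"
      by (simp add: abs_of_nonneg mult.commute)
    show ?thesis unfolding e using a d by linarith
  qed
  show ?thesis
    by (rule Bochner_Integration.integrable_bound[OF int1 _ AE_I2[OF bnd]]) measurable
qed

lemma cross_zero:
  fixes G :: "'i \<Rightarrow> 'a \<Rightarrow> 'd::euclidean_space"
  assumes ind: "indep_vars (\<lambda>_. borel) G J" and ij: "i \<in> J" "j \<in> J" "i \<noteq> j"
    and Gi: "distributed M lborel (G i) std_gauss_density"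
    and Gj: "distributed M lborel (G j) std_gauss_density"
  shows "integrable M (\<lambda>\<omega>. G i \<omega> \<bullet> G j \<omega>)" and "(\<integral>\<omega>. G i \<omega> \<bullet> G j \<omega> \<partial>M) = 0"
proof -
  have ind2: "indep_vars (\<lambda>_. borel) (\<lambda>l \<omega>. G l \<omega> \<bullet> b) {i, j}" for b :: 'd
    by (rule indep_vars_compose2[OF indep_vars_subset[OF ind]]) (use ij in auto)
  have intl: "l \<in> {i, j} \<Longrightarrow> integrable M (\<lambda>\<omega>. G l \<omega> \<bullet> b)" for l b
    using gauss_int1[OF Gi] gauss_int1[OF Gj] by auto
  have prod_eq: "(\<Prod>l\<in>{i, j}. G l \<omega> \<bullet> b) = (G i \<omega> \<bullet> b) * (G j \<omega> \<bullet> b)" for \<omega> b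
    using ij by simp
  have intb: "integrable M (\<lambda>\<omega>. (G i \<omega> \<bullet> b) * (G j \<omega> \<bullet> b))" for b
    using indep_vars_integrable[OF _ ind2 intl] unfolding prod_eq by simp
  have intgb: "(\<integral>\<omega>. (G i \<omega> \<bullet> b) * (G j \<omega> \<bullet> b) \<partial>M) = 0" for b
  proof -
    have "(\<integral>\<omega>. (G i \<omega> \<bullet> b) * (G j \<omega> \<bullet> b) \<partial>M) = (\<Prod>l\<in>{i, j}. \<integral>\<omega>. G l \<omega> \<bullet> b \<partial>M)"
      using indep_vars_lebesgue_integral[OF _ ind2 intl] unfolding prod_eq by simp
    also have "\<dots> = 0" using gauss_mean[OF Gi] ij by simp
    finally show ?thesis .
  qed
  have eq: "(\<lambda>\<omega>. G i \<omega> \<bullet> G j \<omega>) = (\<lambda>\<omega>. \<Sum>b\<in>Basis. (G i \<omega> \<bullet> b) * (G j \<omega> \<bullet> b))"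
    by (rule ext) (rule euclidean_inner)
  show "integrable M (\<lambda>\<omega>. G i \<omega> \<bullet> G j \<omega>)"
    unfolding eq by (intro Bochner_Integration.integrable_sum intb)
  show "(\<integral>\<omega>. G i \<omega> \<bullet> G j \<omega> \<partial>M) = 0"
    unfolding eq by (subst Bochner_Integration.integral_sum) (auto intro: intb simp: intgb)
qed

lemma sum_second:
  fixes G :: "'i \<Rightarrow> 'a \<Rightarrow> 'd::euclidean_space"
  assumes ind: "indep_vars (\<lambda>_. borel) G J" and A: "finite A" "A \<subseteq> J"
    and D: "\<And>i. i \<in> A \<Longrightarrow> distributed M lborel (G i) std_gauss_density"
  shows "integrable M (\<lambda>\<omega>. (norm (\<Sum>i\<in>A. G i \<omega>))\<^sup>2)"
    and "(\<integral>\<omega>. (norm (\<Sum>i\<in>A. G i \<omega>))\<^sup>2 \<partial>M) \<le> real (card A) * (5/2 * real DIM('d))"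
proof -
  have eq: "(\<lambda>\<omega>. (norm (\<Sum>i\<in>A. G i \<omega>))\<^sup>2) = (\<lambda>\<omega>. \<Sum>i\<in>A. \<Sum>j\<in>A. G i \<omega> \<bullet> G j \<omega>)"
    unfolding power2_norm_eq_inner inner_sum_left inner_sum_right by (rule ext) (rule sum.swap)
  have intij: "i \<in> A \<Longrightarrow> j \<in> A \<Longrightarrow> integrable M (\<lambda>\<omega>. G i \<omega> \<bullet> G j \<omega>)" for i j
  proof (cases "i = j")
    case True
    assume "i \<in> A"
    thus ?thesis using gauss_int2(1)[OF D[of i]] True by (simp add: power2_norm_eq_inner)
  next
    case False
    assume "i \<in> A" "j \<in> A"
    thus ?thesis using cross_zero(1)[OF ind _ _ False D D] A by auto
  qed
  show "integrable M (\<lambda>\<omega>. (norm (\<Sum>i\<in>A. G i \<omega>))\<^sup>2)"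
    unfolding eq by (intro Bochner_Integration.integrable_sum intij)
  have "(\<integral>\<omega>. (norm (\<Sum>i\<in>A. G i \<omega>))\<^sup>2 \<partial>M) = (\<Sum>i\<in>A. \<Sum>j\<in>A. \<integral>\<omega>. G i \<omega> \<bullet> G j \<omega> \<partial>M)"
    unfolding eq
    by (subst Bochner_Integration.integral_sum, (intro Bochner_Integration.integrable_sum intij; assumption))
       (intro sum.cong refl Bochner_Integration.integral_sum intij; assumption)
  also have "\<dots> = (\<Sum>i\<in>A. \<integral>\<omega>. (norm (G i \<omega>))\<^sup>2 \<partial>M)"
  proof (rule sum.cong[OF refl])
    fix i assume i: "i \<in> A"
    have "(\<Sum>j\<in>A. \<integral>\<omega>. G i \<omega> \<bullet> G j \<omega> \<partial>M) = (\<Sum>j\<in>A. if j = i then \<integral>\<omega>. (norm (G i \<omega>))\<^sup>2 \<partial>M else 0)"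
    proof (rule sum.cong[OF refl])
      fix j assume j: "j \<in> A"
      show "(\<integral>\<omega>. G i \<omega> \<bullet> G j \<omega> \<partial>M) = (if j = i then \<integral>\<omega>. (norm (G i \<omega>))\<^sup>2 \<partial>M else 0)"
      proof (cases "j = i")
        case True thus ?thesis by (simp add: power2_norm_eq_inner)
      next
        case False
        thus ?thesis using cross_zero(2)[OF ind _ _ _ D[OF i] D[OF j]] i j A by auto
      qed
    qed
    also have "\<dots> = \<integral>\<omega>. (norm (G i \<omega>))\<^sup>2 \<partial>M" using i A by simp
    finally show "(\<Sum>j\<in>A. \<integral>\<omega>. G i \<omega> \<bullet> G j \<omega> \<partial>M) = \<integral>\<omega>. (norm (G i \<omega>))\<^sup>2 \<partial>M" .
  qed
  also have "\<dots> \<le> (\<Sum>i\<in>A. 5/2 * real DIM('d))"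
    by (rule sum_mono) (rule gauss_int2(2)[OF D])
  also have "\<dots> = real (card A) * (5/2 * real DIM('d))" by simp
  finally show "(\<integral>\<omega>. (norm (\<Sum>i\<in>A. G i \<omega>))\<^sup>2 \<partial>M) \<le> real (card A) * (5/2 * real DIM('d))" .
qed

end



theorem mainTheorem10:
  fixes V :: "'d::euclidean_space \<Rightarrow> real"
    and M :: "'a measure"
    and G :: "nat + (nat \<times> nat) \<Rightarrow> 'a \<Rightarrow> 'd"
    and \<sigma> \<gamma> \<xi> :: real and K m :: nat
  assumes "0 < \<sigma>" "\<sigma> \<le> 1"
    and "assumption_A V"
    and "0 < \<gamma>" "0 < \<xi>"
    and "\<gamma>-lipschitz_on UNIV (fhat V \<sigma>)"
    and "\<forall>x. fhat V \<sigma> x \<ge> \<xi>"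
    and "K \<ge> 1" "m \<ge> 1"
    and "prob_space M"
    and "prob_space.indep_vars M (\<lambda>_. borel) G
           (Inl ` {1..K} \<union> Inr ` ({..<K} \<times> {1..m}))"
    and "\<forall>i \<in> Inl ` {1..K} \<union> Inr ` ({..<K} \<times> {1..m}). distributed M lborel (G i) std_gauss_density"
  shows "\<forall>k \<le> K. (\<integral>\<^sup>+ \<omega>. ennreal ((norm (Yalg V \<sigma> K m (\<lambda>n. G (Inl n) \<omega>) (\<lambda>k j. G (Inr (k, j)) \<omega>) k))^2) \<partial>M)
                 \<le> ennreal (6 * \<gamma>^2 / \<xi>^2 + 3 * real DIM('d))"
proof -
  interpret P: prob_space M by (rule assms(10))
  define J where "J = Inl ` {1..K} \<union> Inr ` ({..<K} \<times> {1..m})"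
  have ind: "P.indep_vars (\<lambda>_. borel) G J" using assms(11) unfolding J_def .
  have dist: "\<And>i. i \<in> J \<Longrightarrow> distributed M lborel (G i) std_gauss_density" using assms(12) unfolding J_def by blast
  have gb: "\<And>x. norm (grad (fhat V \<sigma>) x) \<le> \<gamma>" by (rule grad_bound[OF assms(3) assms(6)])
  have bt: "\<And>Z y k. norm (btilde V \<sigma> K m Z y k) \<le> \<gamma> / \<xi>"
    by (rule btilde_bound[OF gb assms(7) assms(5) assms(9)])
  show ?thesis
  proof (intro allI impI)
    fix k assume kK: "k \<le> K"
    define c where "c = \<sigma> * (1 / real K)"
    have cnn: "0 \<le> c" unfolding c_def using assms(1) by simp
    have kc: "real k * c \<le> 1"
    proof -
      have "real k * c = \<sigma> * (real k / real K)" unfolding c_def by simp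
      also have "\<dots> \<le> 1 * 1"
        using assms(1,2,8) kK by (intro mult_mono) (auto simp: divide_le_eq_1)
      finally show ?thesis by simp
    qed
    define S where "S \<omega> = (\<Sum>i\<in>{1..k}. G (Inl i) \<omega>)" for \<omega>
    define C where "C = 6 * \<gamma>^2 / \<xi>^2"
    have Cnn: "0 \<le> C" unfolding C_def by simp
    have point: "(norm (Yalg V \<sigma> K m (\<lambda>n. G (Inl n) \<omega>) (\<lambda>k j. G (Inr (k, j)) \<omega>) k))^2
                  \<le> C + 6/5 * c * (norm (S \<omega>))^2" for \<omega>
    proof -
      obtain A where A: "norm A \<le> real k * c * (\<gamma> / \<xi>)"
        "Yalg V \<sigma> K m (\<lambda>n. G (Inl n) \<omega>) (\<lambda>k j. G (Inr (k, j)) \<omega>) k = A + sqrt c *\<^sub>R S \<omega>"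
        using Yalg_decomp[OF bt assms(1), of k "\<lambda>n. G (Inl n) \<omega>"] unfolding c_def S_def by blast
      have gx: "0 \<le> \<gamma> / \<xi>" using assms(4,5) by simp
      have "norm A \<le> \<gamma> / \<xi>"
        using A(1) mult_right_mono[OF kc gx] by simp
      hence nA: "(norm A)^2 \<le> (\<gamma> / \<xi>)^2" by (rule power_mono) simp
      have nS: "(norm (sqrt c *\<^sub>R S \<omega>))^2 = c * (norm (S \<omega>))^2"
        using cnn by (simp add: power_mult_distrib)
      have "(norm (A + sqrt c *\<^sub>R S \<omega>))^2 \<le> 6 * (norm A)^2 + 6/5 * (norm (sqrt c *\<^sub>R S \<omega>))^2"
        by (rule sq_split)
      also have "\<dots> \<le> C + 6/5 * c * (norm (S \<omega>))^2"
        unfolding nS C_def using nA by (simp add: power_divide)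
      finally show ?thesis unfolding A(2) .
    qed
    have sub: "Inl ` {1..k} \<subseteq> J" unfolding J_def using kK by auto
    have Seq: "S \<omega> = (\<Sum>i\<in>Inl ` {1..k}. G i \<omega>)" for \<omega>
      unfolding S_def by (subst sum.reindex) (auto simp: inj_on_def)
    have card: "card (Inl ` {1..k} :: (nat + nat \<times> nat) set) = k"
      by (subst card_image) (auto simp: inj_on_def)
    have intS: "integrable M (\<lambda>\<omega>. (norm (S \<omega>))^2)"
      unfolding Seq by (rule P.sum_second(1)[OF ind _ sub]) (use sub dist in auto)
    have ES: "(\<integral>\<omega>. (norm (S \<omega>))^2 \<partial>M) \<le> real k * (5/2 * real DIM('d))"
      unfolding Seq using P.sum_second(2)[OF ind _ sub] sub dist card by auto
    have intT: "integrable M (\<lambda>\<omega>. C + 6/5 * c * (norm (S \<omega>))^2)"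
      using intS by auto
    have "(\<integral>\<^sup>+ \<omega>. ennreal ((norm (Yalg V \<sigma> K m (\<lambda>n. G (Inl n) \<omega>) (\<lambda>k j. G (Inr (k, j)) \<omega>) k))^2) \<partial>M)
        \<le> (\<integral>\<^sup>+ \<omega>. ennreal (C + 6/5 * c * (norm (S \<omega>))^2) \<partial>M)"
      by (rule nn_integral_mono) (rule ennreal_leI[OF point])
    also have "\<dots> = ennreal (\<integral>\<omega>. C + 6/5 * c * (norm (S \<omega>))^2 \<partial>M)"
      by (rule nn_integral_eq_integral[OF intT]) (use Cnn cnn in auto)
    also have "(\<integral>\<omega>. C + 6/5 * c * (norm (S \<omega>))^2 \<partial>M) = C + 6/5 * c * (\<integral>\<omega>. (norm (S \<omega>))^2 \<partial>M)"
      using intS by (simp add: P.prob_space)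
    also have "\<dots> \<le> C + 6/5 * c * (real k * (5/2 * real DIM('d)))"
      using ES cnn by (intro add_left_mono mult_left_mono) auto
    also have "\<dots> = C + 3 * (real k * c) * real DIM('d)" by simp
    also have "\<dots> \<le> C + 3 * 1 * real DIM('d)"
      using kc by (intro add_left_mono mult_right_mono mult_left_mono) auto
    finally show "(\<integral>\<^sup>+ \<omega>. ennreal ((norm (Yalg V \<sigma> K m (\<lambda>n. G (Inl n) \<omega>) (\<lambda>k j. G (Inr (k, j)) \<omega>) k))^2) \<partial>M)
                 \<le> ennreal (6 * \<gamma>^2 / \<xi>^2 + 3 * real DIM('d))"
      unfolding C_def by (simp add: ennreal_leI)
  qed
qed


end
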